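(* Let $\Pi=\{\pi^*_i\}_{i=1}^n$ be a set of policies where each $\pi^*_i$ is optimal with respect to weight vector $\mathbf{w}_i\in\mathcal{W}$, and suppose that the set $\Psi=\{\boldsymbol{\psi}^{\pi^*_i}\}_{i=1}^n$ of their expected successor features is an $\epsilon_1$-CCS. Let $\phi_{\max}=\max\|\boldsymbol{\phi}\|$ be the maximum norm of the reward feature vector. Then the GPI-expanded set $\Psi^{\text{GPI}}$ is an $\epsilon_2$-CCS, where $$\epsilon_2\le\min\Big\{\epsilon_1,\ \frac{2}{1-\gamma}\,\phi_{\max}\,\max_{\mathbf{w}\in\mathcal{W}}\min_i\|\mathbf{w}-\mathbf{w}_i\|\Big\}.$$
   Context: Consider MDPs $(\mathcal{S},\mathcal{A},p,r_{\mathbf{w}},\mu,\gamma)$ sharing $\mathcal{S},\mathcal{A}$, transition kernel $p$, initial state distribution $\mu$ and discount $\gamma\in[0,1)$, with rewards linear in fixed features $\boldsymbol{\phi}(s,a,s')\in\mathbb{R}^d$: $r_{\mathbf{w}}(s,a,s')=\boldsymbol{\phi}(s,a,s')\cdot\mathbf{w}$. The task set $\mathcal{W}$ is the probability simplex $\{\mathbf{w}\in\mathbb{R}^d:w_i\ge0,\sum_iw_i=1\}$. For a policy $\pi$, successor features are $\boldsymbol{\psi}^\pi(s,a)=\mathbb{E}_\pi[\sum_{i\ge0}\gamma^i\boldsymbol{\phi}(S_{t+i},A_{t+i},S_{t+i+1})\mid S_t=s,A_t=a]$, $q^\pi_{\mathbf{w}}(s,a)=\boldsymbol{\psi}^\pi(s,a)\cdot\mathbf{w}$,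 the expected successor feature vector is $\boldsymbol{\psi}^\pi=\mathbb{E}_{S_0\sim\mu}[\boldsymbol{\psi}^\pi(S_0,\pi(S_0))]$, and $v^\pi_{\mathbf{w}}=\boldsymbol{\psi}^\pi\cdot\mathbf{w}$; $v^*_{\mathbf{w}}=\max_\pi v^\pi_{\mathbf{w}}$ over all policies. The convex coverage set is $\mathrm{CCS}=\{\boldsymbol{\psi}^\pi\mid\exists\mathbf{w}\text{ s.t. }\forall\pi',\ v^\pi_{\mathbf{w}}\ge v^{\pi'}_{\mathbf{w}}\}$. A set $\Psi$ of expected successor feature vectors is an $\epsilon$-CCS if for all $\mathbf{w}\in\mathcal{W}$, $\max_{\boldsymbol{\psi}\in\mathrm{CCS}}\boldsymbol{\psi}\cdot\mathbf{w}-\max_{\boldsymbol{\psi}\in\Psi}\boldsymbol{\psi}\cdot\mathbf{w}\le\epsilon$ (equivalently $v^*_{\mathbf{w}}-\max_{\boldsymbol{\psi}\in\Psi}\boldsymbol{\psi}\cdot\mathbf{w}\le\epsilon$). For a policy set $\Pi$ and $\mathbf{w}\in\mathcal{W}$, the GPI policy is $\pi^{\text{GPI}}(s;\mathbf{w})\in\arg\max_{a\in\mathcal{A}}\max_{\pi\in\Pi}q^\pi_{\mathbf{w}}(s,a)$, and the GPI-expanded set is $\Psi^{\text{GPI}}=\{\boldsymbol{\psi}^\pi\mid\pi\in\{\pi^{\text{GPI}}(\cdot;\mathbf{w}):\mathbf{w}\in\mathcal{W}\}\}$. *)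

theory Defs
  imports "HOL-Analysis.Analysis"
begin

text \<open>Finite MDP with state type 's, action type 'act, feature dimension 'd.
  p s a s' is the transition probability, phi s a s' the reward feature vector,
  mu the initial state distribution, gamma the discount.\<close>

text \<open>Action taken at step i of a trajectory that starts with S_t = s, A_t = a
  and follows pol afterwards.\<close>
definition sf_act :: "('s \<Rightarrow> 'act) \<Rightarrow> 'act \<Rightarrow> nat \<Rightarrow> 's \<Rightarrow> 'act" where
  "sf_act pol a i x = (if i = 0 then a else pol x)"

text \<open>Distribution of S_{t+i} given S_t = s, A_t = a, following pol afterwards.\<close>
primrec state_dist :: "('s::finite \<Rightarrow> 'act \<Rightarrow> 's \<Rightarrow> real) \<Rightarrow> ('s \<Rightarrow> 'act) \<Rightarrow> 's \<Rightarrow> 'act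
    \<Rightarrow> nat \<Rightarrow> 's \<Rightarrow> real" where
  "state_dist p pol s a 0 = (\<lambda>x. if x = s then 1 else 0)"
| "state_dist p pol s a (Suc i) =
     (\<lambda>y. \<Sum>x\<in>UNIV. state_dist p pol s a i x * p x (sf_act pol a i x) y)"

text \<open>E[phi(S_{t+i}, A_{t+i}, S_{t+i+1}) | S_t = s, A_t = a], following pol.\<close>
definition exp_feature :: "('s::finite \<Rightarrow> 'act \<Rightarrow> 's \<Rightarrow> real) \<Rightarrow> ('s \<Rightarrow> 'act \<Rightarrow> 's \<Rightarrow> real^'d)
    \<Rightarrow> ('s \<Rightarrow> 'act) \<Rightarrow> 's \<Rightarrow> 'act \<Rightarrow> nat \<Rightarrow> real^'d" where
  "exp_feature p phi pol s a i =
     (\<Sum>x\<in>UNIV. state_dist p pol s a i x *\<^sub>R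
        (\<Sum>y\<in>UNIV. p x (sf_act pol a i x) y *\<^sub>R phi x (sf_act pol a i x) y))"

definition sf :: "('s::finite \<Rightarrow> 'act \<Rightarrow> 's \<Rightarrow> real) \<Rightarrow> ('s \<Rightarrow> 'act \<Rightarrow> 's \<Rightarrow> real^'d) \<Rightarrow> real
    \<Rightarrow> ('s \<Rightarrow> 'act) \<Rightarrow> 's \<Rightarrow> 'act \<Rightarrow> real^'d" where
  "sf p phi gamma pol s a = (\<Sum>i. (gamma ^ i) *\<^sub>R exp_feature p phi pol s a i)"

definition exp_sf :: "('s::finite \<Rightarrow> 'act \<Rightarrow> 's \<Rightarrow> real) \<Rightarrow> ('s \<Rightarrow> 'act \<Rightarrow> 's \<Rightarrow> real^'d) \<Rightarrow> real
    \<Rightarrow> ('s \<Rightarrow> real) \<Rightarrow> ('s \<Rightarrow> 'act) \<Rightarrow> real^'d" where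
  "exp_sf p phi gamma mu pol = (\<Sum>s\<in>UNIV. mu s *\<^sub>R sf p phi gamma pol s (pol s))"

definition qval :: "('s::finite \<Rightarrow> 'act \<Rightarrow> 's \<Rightarrow> real) \<Rightarrow> ('s \<Rightarrow> 'act \<Rightarrow> 's \<Rightarrow> real^'d) \<Rightarrow> real
    \<Rightarrow> ('s \<Rightarrow> 'act) \<Rightarrow> real^'d \<Rightarrow> 's \<Rightarrow> 'act \<Rightarrow> real" where
  "qval p phi gamma pol w s a = sf p phi gamma pol s a \<bullet> w"

definition val :: "('s::finite \<Rightarrow> 'act \<Rightarrow> 's \<Rightarrow> real) \<Rightarrow> ('s \<Rightarrow> 'act \<Rightarrow> 's \<Rightarrow> real^'d) \<Rightarrow> real
    \<Rightarrow> ('s \<Rightarrow> real) \<Rightarrow> ('s \<Rightarrow> 'act) \<Rightarrow> real^'d \<Rightarrow> real" where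
  "val p phi gamma mu pol w = exp_sf p phi gamma mu pol \<bullet> w"

definition task_set :: "(real^'d) set" where
  "task_set = {w. (\<forall>i. 0 \<le> w $ i) \<and> (\<Sum>i\<in>UNIV. w $ i) = 1}"

definition CCS :: "('s::finite \<Rightarrow> 'act::finite \<Rightarrow> 's \<Rightarrow> real) \<Rightarrow> ('s \<Rightarrow> 'act \<Rightarrow> 's \<Rightarrow> real^'d)
    \<Rightarrow> real \<Rightarrow> ('s \<Rightarrow> real) \<Rightarrow> (real^'d) set" where
  "CCS p phi gamma mu = {exp_sf p phi gamma mu pol | pol.
      \<exists>w. \<forall>pol'. val p phi gamma mu pol' w \<le> val p phi gamma mu pol w}"

definition eps_CCS :: "('s::finite \<Rightarrow> 'act::finite \<Rightarrow> 's \<Rightarrow> real) \<Rightarrow> ('s \<Rightarrow> 'act \<Rightarrow> 's \<Rightarrow> real^'d)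
    \<Rightarrow> real \<Rightarrow> ('s \<Rightarrow> real) \<Rightarrow> (real^'d) set \<Rightarrow> real \<Rightarrow> bool" where
  "eps_CCS p phi gamma mu Psi eps =
     (\<forall>w\<in>task_set. (SUP psi\<in>CCS p phi gamma mu. psi \<bullet> w) - (SUP psi\<in>Psi. psi \<bullet> w) \<le> eps)"

definition optimal_policy :: "('s::finite \<Rightarrow> 'act \<Rightarrow> 's \<Rightarrow> real) \<Rightarrow> ('s \<Rightarrow> 'act \<Rightarrow> 's \<Rightarrow> real^'d)
    \<Rightarrow> real \<Rightarrow> ('s \<Rightarrow> 'act) \<Rightarrow> real^'d \<Rightarrow> bool" where
  "optimal_policy p phi gamma pol w =
     (\<forall>pol' s. qval p phi gamma pol' w s (pol' s) \<le> qval p phi gamma pol w s (pol s))"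

definition is_GPI_policy :: "('s::finite \<Rightarrow> 'act \<Rightarrow> 's \<Rightarrow> real) \<Rightarrow> ('s \<Rightarrow> 'act \<Rightarrow> 's \<Rightarrow> real^'d)
    \<Rightarrow> real \<Rightarrow> ('s \<Rightarrow> 'act) set \<Rightarrow> real^'d \<Rightarrow> ('s \<Rightarrow> 'act) \<Rightarrow> bool" where
  "is_GPI_policy p phi gamma Pols w pig =
     (\<forall>s a. (MAX pol\<in>Pols. qval p phi gamma pol w s a) \<le> (MAX pol\<in>Pols. qval p phi gamma pol w s (pig s)))"

end

theory Submission imports Defs begin

lemma sd_nonneg:
  assumes "\<forall>s a s'. 0 \<le> p s a s'"
  shows "0 \<le> state_dist p pol s a i x"
  using assms by (induction i arbitrary: x) (auto intro!: sum_nonneg)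

lemma sd_sum:
  assumes P1: "\<forall>s a s'. 0 \<le> p s a s'" and P2: "\<forall>s a. (\<Sum>s'\<in>UNIV. p s a s') = 1"
  shows "(\<Sum>x\<in>UNIV. state_dist p pol s a i x) = 1"
proof (induction i)
  case 0 then show ?case by simp
next
  case (Suc i)
  have "(\<Sum>y\<in>UNIV. state_dist p pol s a (Suc i) y)
      = (\<Sum>y\<in>UNIV. \<Sum>x\<in>UNIV. state_dist p pol s a i x * p x (sf_act pol a i x) y)" by simp
  also have "\<dots> = (\<Sum>x\<in>UNIV. \<Sum>y\<in>UNIV. state_dist p pol s a i x * p x (sf_act pol a i x) y)"
    by (rule sum.swap)
  also have "\<dots> = (\<Sum>x\<in>UNIV. state_dist p pol s a i x * (\<Sum>y\<in>UNIV. p x (sf_act pol a i x) y))"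
    by (simp add: sum_distrib_left)
  also have "\<dots> = 1" using P2 Suc by simp
  finally show ?case .
qed

lemma sd_act:
  "state_dist p pol s' (pol s') i x \<noteq> 0 \<Longrightarrow> sf_act pol (pol s') i x = pol x"
  by (cases i) (auto simp: sf_act_def split: if_splits)

lemma sd_act_mult:
  "state_dist p pol s' (pol s') i x * p x (sf_act pol (pol s') i x) y
   = state_dist p pol s' (pol s') i x * p x (pol x) y"
  by (cases "state_dist p pol s' (pol s') i x = 0") (simp_all add: sd_act)

lemma sd_Suc_decomp:
  "state_dist p pol s a (Suc i) y = (\<Sum>s'\<in>UNIV. p s a s' * state_dist p pol s' (pol s') i y)"
proof (induction i arbitrary: y)
  case 0
  have "(\<Sum>x\<in>UNIV. (if x = s then 1 else 0) * p x a y) = p s a y"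
  proof -
    have "(\<Sum>x\<in>UNIV. (if x = s then 1 else 0) * p x a y) = (\<Sum>x\<in>UNIV. if x = s then p x a y else 0)"
      by (rule sum.cong) auto
    then show ?thesis by simp
  qed
  moreover have "(\<Sum>s'\<in>UNIV. p s a s' * (if y = s' then 1 else 0)) = p s a y"
  proof -
    have "(\<Sum>s'\<in>UNIV. p s a s' * (if y = s' then 1 else 0)) = (\<Sum>s'\<in>UNIV. if y = s' then p s a s' else 0)"
      by (rule sum.cong) auto
    then show ?thesis by simp
  qed
  ultimately show ?case by (simp add: sf_act_def)
next
  case (Suc i)
  have "state_dist p pol s a (Suc (Suc i)) y
      = (\<Sum>x\<in>UNIV. state_dist p pol s a (Suc i) x * p x (pol x) y)"
    by (simp only: state_dist.simps(2)[of p pol s a "Suc i"] sf_act_def nat.distinct if_False)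
  also have "\<dots> = (\<Sum>x\<in>UNIV. (\<Sum>s'\<in>UNIV. p s a s' * state_dist p pol s' (pol s') i x) * p x (pol x) y)"
    by (simp only: Suc.IH)
  also have "\<dots> = (\<Sum>x\<in>UNIV. \<Sum>s'\<in>UNIV. p s a s' * (state_dist p pol s' (pol s') i x * p x (pol x) y))"
    by (simp add: sum_distrib_right mult.assoc)
  also have "\<dots> = (\<Sum>s'\<in>UNIV. \<Sum>x\<in>UNIV. p s a s' * (state_dist p pol s' (pol s') i x * p x (pol x) y))"
    by (rule sum.swap)
  also have "\<dots> = (\<Sum>s'\<in>UNIV. p s a s' * (\<Sum>x\<in>UNIV. state_dist p pol s' (pol s') i x * p x (sf_act pol (pol s') i x) y))"
    by (simp only: sum_distrib_left sd_act_mult)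
  also have "\<dots> = (\<Sum>s'\<in>UNIV. p s a s' * state_dist p pol s' (pol s') (Suc i) y)" by simp
  finally show ?case .
qed

lemma ef_Suc:
  "exp_feature p phi pol s a (Suc i) = (\<Sum>s'\<in>UNIV. p s a s' *\<^sub>R exp_feature p phi pol s' (pol s') i)"
proof -
  define G where "G x b = (\<Sum>y\<in>UNIV. p x b y *\<^sub>R phi x b y)" for x b
  have "exp_feature p phi pol s a (Suc i) = (\<Sum>x\<in>UNIV. state_dist p pol s a (Suc i) x *\<^sub>R G x (pol x))"
    by (simp add: exp_feature_def G_def sf_act_def)
  also have "\<dots> = (\<Sum>x\<in>UNIV. \<Sum>s'\<in>UNIV. (p s a s' * state_dist p pol s' (pol s') i x) *\<^sub>R G x (pol x))"
    by (simp only: sd_Suc_decomp scaleR_sum_left)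
  also have "\<dots> = (\<Sum>x\<in>UNIV. \<Sum>s'\<in>UNIV. p s a s' *\<^sub>R (state_dist p pol s' (pol s') i x *\<^sub>R G x (pol x)))"
    by simp
  also have "\<dots> = (\<Sum>s'\<in>UNIV. \<Sum>x\<in>UNIV. p s a s' *\<^sub>R (state_dist p pol s' (pol s') i x *\<^sub>R G x (pol x)))"
    by (rule sum.swap)
  also have "\<dots> = (\<Sum>s'\<in>UNIV. p s a s' *\<^sub>R (\<Sum>x\<in>UNIV. state_dist p pol s' (pol s') i x *\<^sub>R G x (sf_act pol (pol s') i x)))"
  proof -
    have e: "state_dist p pol s' (pol s') i x *\<^sub>R G x (sf_act pol (pol s') i x)
       = state_dist p pol s' (pol s') i x *\<^sub>R G x (pol x)" for s' x
      by (cases "state_dist p pol s' (pol s') i x = 0") (simp_all add: sd_act)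
    show ?thesis by (simp only: scaleR_sum_right e)
  qed
  also have "\<dots> = (\<Sum>s'\<in>UNIV. p s a s' *\<^sub>R exp_feature p phi pol s' (pol s') i)"
    by (simp add: exp_feature_def G_def)
  finally show ?thesis .
qed

lemma ef_norm:
  assumes P1: "\<forall>s a s'. 0 \<le> p s a s'" and P2: "\<forall>s a. (\<Sum>s'\<in>UNIV. p s a s') = 1"
    and B: "\<forall>s a s'. norm (phi s a s') \<le> B"
  shows "norm (exp_feature p phi pol s a i) \<le> B"
proof -
  define G where "G x b = (\<Sum>y\<in>UNIV. p x b y *\<^sub>R phi x b y)" for x b
  have G: "norm (G x b) \<le> B" for x b
  proof -
    have "norm (G x b) \<le> (\<Sum>y\<in>UNIV. norm (p x b y *\<^sub>R phi x b y))"
      unfolding G_def by (rule norm_sum)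
    also have "\<dots> \<le> (\<Sum>y\<in>UNIV. p x b y * B)"
      using P1 B by (intro sum_mono) (simp add: mult_left_mono)
    also have "\<dots> = B" using P2 by (simp add: sum_distrib_right[symmetric])
    finally show ?thesis .
  qed
  have "norm (exp_feature p phi pol s a i) \<le> (\<Sum>x\<in>UNIV. norm (state_dist p pol s a i x *\<^sub>R G x (sf_act pol a i x)))"
    unfolding exp_feature_def G_def by (rule norm_sum)
  also have "\<dots> \<le> (\<Sum>x\<in>UNIV. state_dist p pol s a i x * B)"
    using G sd_nonneg[OF P1] by (intro sum_mono) (simp add: mult_left_mono)
  also have "\<dots> = B" using sd_sum[OF P1 P2] by (simp add: sum_distrib_right[symmetric])
  finally show ?thesis .
qed

lemma sf_sums:
  assumes P1: "\<forall>s a s'. 0 \<le> p s a s'" and P2: "\<forall>s a. (\<Sum>s'\<in>UNIV. p s a s') = 1"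
    and B: "\<forall>s a s'. norm (phi s a s') \<le> B" and g: "0 \<le> gamma" "gamma < 1"
  shows "(\<lambda>i. gamma ^ i *\<^sub>R exp_feature p phi pol s a i) sums sf p phi gamma pol s a"
    and "norm (sf p phi gamma pol s a) \<le> B / (1 - gamma)"
proof -
  have nb: "norm (gamma ^ i *\<^sub>R exp_feature p phi pol s a i) \<le> B * gamma ^ i" for i
  proof -
    have "gamma ^ i * norm (exp_feature p phi pol s a i) \<le> gamma ^ i * B"
      by (rule mult_left_mono) (use ef_norm[OF P1 P2 B] g in auto)
    then show ?thesis using g by (simp add: mult.commute)
  qed
  have sg: "summable (\<lambda>i. B * gamma ^ i)"
    using g by (intro summable_mult summable_geometric) simp
  have sn: "summable (\<lambda>i. norm (gamma ^ i *\<^sub>R exp_feature p phi pol s a i))"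
    by (rule summable_comparison_test[OF _ sg]) (use nb in auto)
  have "summable (\<lambda>i. gamma ^ i *\<^sub>R exp_feature p phi pol s a i)"
    by (rule summable_norm_cancel[OF sn])
  then show "(\<lambda>i. gamma ^ i *\<^sub>R exp_feature p phi pol s a i) sums sf p phi gamma pol s a"
    unfolding sf_def by (rule summable_sums)
  have "norm (sf p phi gamma pol s a) \<le> (\<Sum>i. norm (gamma ^ i *\<^sub>R exp_feature p phi pol s a i))"
    unfolding sf_def by (rule summable_norm[OF sn])
  also have "\<dots> \<le> (\<Sum>i. B * gamma ^ i)"
    by (rule suminf_le[OF nb sn sg])
  also have "\<dots> = B / (1 - gamma)"
    using g by (simp add: suminf_mult suminf_geometric divide_simps)
  finally show "norm (sf p phi gamma pol s a) \<le> B / (1 - gamma)" .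
qed


lemma ef_0: "exp_feature p phi pol s a 0 = (\<Sum>y\<in>UNIV. p s a y *\<^sub>R phi s a y)"
proof -
  have "exp_feature p phi pol s a 0 = (\<Sum>x\<in>UNIV. if x = s then (\<Sum>y\<in>UNIV. p s a y *\<^sub>R phi s a y) else 0)"
    unfolding exp_feature_def by (rule sum.cong) (auto simp: sf_act_def)
  then show ?thesis by simp
qed

lemma bellman:
  assumes P1: "\<forall>s a s'. 0 \<le> p s a s'" and P2: "\<forall>s a. (\<Sum>s'\<in>UNIV. p s a s') = 1"
    and B: "\<forall>s a s'. norm (phi s a s') \<le> B" and g: "0 \<le> gamma" "gamma < 1"
  shows "sf p phi gamma pol s a = (\<Sum>y\<in>UNIV. p s a y *\<^sub>R phi s a y)
           + gamma *\<^sub>R (\<Sum>s'\<in>UNIV. p s a s' *\<^sub>R sf p phi gamma pol s' (pol s'))"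
proof -
  define f where "f i = gamma ^ i *\<^sub>R exp_feature p phi pol s a i" for i
  have "(\<lambda>i. \<Sum>s'\<in>UNIV. (gamma * p s a s') *\<^sub>R (gamma ^ i *\<^sub>R exp_feature p phi pol s' (pol s') i))
        sums (\<Sum>s'\<in>UNIV. (gamma * p s a s') *\<^sub>R sf p phi gamma pol s' (pol s'))"
    by (intro sums_sum sums_scaleR_right sf_sums(1)[OF P1 P2 B g])
  moreover have "f (Suc i) = (\<Sum>s'\<in>UNIV. (gamma * p s a s') *\<^sub>R (gamma ^ i *\<^sub>R exp_feature p phi pol s' (pol s') i))" for i
    by (simp add: f_def ef_Suc scaleR_sum_right mult_ac)
  ultimately have "(\<lambda>i. f (Suc i)) sums (\<Sum>s'\<in>UNIV. (gamma * p s a s') *\<^sub>R sf p phi gamma pol s' (pol s'))"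
    by simp
  then have "f sums ((\<Sum>s'\<in>UNIV. (gamma * p s a s') *\<^sub>R sf p phi gamma pol s' (pol s')) + f 0)"
    by (simp add: sums_Suc_iff)
  moreover have "f sums sf p phi gamma pol s a"
    unfolding f_def by (rule sf_sums(1)[OF P1 P2 B g])
  ultimately have "sf p phi gamma pol s a = (\<Sum>s'\<in>UNIV. (gamma * p s a s') *\<^sub>R sf p phi gamma pol s' (pol s')) + f 0"
    using sums_unique2 by blast
  then show ?thesis
    by (simp add: f_def ef_0 scaleR_sum_right)
qed

lemma bellman_q:
  assumes P1: "\<forall>s a s'. 0 \<le> p s a s'" and P2: "\<forall>s a. (\<Sum>s'\<in>UNIV. p s a s') = 1"
    and B: "\<forall>s a s'. norm (phi s a s') \<le> B" and g: "0 \<le> gamma" "gamma < 1"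
  shows "qval p phi gamma pol w s a = (\<Sum>y\<in>UNIV. p s a y *\<^sub>R phi s a y) \<bullet> w
           + gamma * (\<Sum>s'\<in>UNIV. p s a s' * qval p phi gamma pol w s' (pol s'))"
  unfolding qval_def
  by (subst bellman[OF P1 P2 B g]) (simp add: inner_add_left inner_sum_left)

lemma gpi_improve:
  fixes p :: "'s::finite \<Rightarrow> 'act::finite \<Rightarrow> 's \<Rightarrow> real"
  assumes P1: "\<forall>s a s'. 0 \<le> p s a s'" and P2: "\<forall>s a. (\<Sum>s'\<in>UNIV. p s a s') = 1"
    and B: "\<forall>s a s'. norm (phi s a s') \<le> B" and g: "0 \<le> gamma" "gamma < 1"
    and fin: "finite Pols" and ne: "Pols \<noteq> {}"
    and G: "is_GPI_policy p phi gamma Pols w pig"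
  shows "(MAX pol\<in>Pols. qval p phi gamma pol w s a) \<le> qval p phi gamma pig w s a"
proof -
  define Q where "Q s a = (MAX pol\<in>Pols. qval p phi gamma pol w s a)" for s a
  define R where "R s a = (\<Sum>y\<in>UNIV. p s a y *\<^sub>R phi s a y) \<bullet> w" for s a
  define q where "q s a = qval p phi gamma pig w s a" for s a
  define D where "D s a = Q s a - q s a" for s a
  have bq: "qval p phi gamma pol w s a = R s a + gamma * (\<Sum>s'\<in>UNIV. p s a s' * qval p phi gamma pol w s' (pol s'))"
    for pol s a unfolding R_def by (rule bellman_q[OF P1 P2 B g])
  have QG: "Q s' b \<le> Q s' (pig s')" for s' b
    using G unfolding is_GPI_policy_def Q_def by blast
  have step1: "Q s a \<le> R s a + gamma * (\<Sum>s'\<in>UNIV. p s a s' * Q s' (pig s'))" for s a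
    unfolding Q_def[of s a]
  proof (rule Max.boundedI)
    show "finite ((\<lambda>pol. qval p phi gamma pol w s a) ` Pols)" using fin by simp
    show "(\<lambda>pol. qval p phi gamma pol w s a) ` Pols \<noteq> {}" using ne by simp
    fix x assume "x \<in> (\<lambda>pol. qval p phi gamma pol w s a) ` Pols"
    then obtain pol where pol: "pol \<in> Pols" and x: "x = qval p phi gamma pol w s a" by blast
    have "qval p phi gamma pol w s' (pol s') \<le> Q s' (pig s')" for s'
    proof -
      have "qval p phi gamma pol w s' (pol s') \<le> Q s' (pol s')"
        unfolding Q_def using fin pol by (intro Max_ge) auto
      also have "\<dots> \<le> Q s' (pig s')" by (rule QG)
      finally show ?thesis .
    qed
    then have "(\<Sum>s'\<in>UNIV. p s a s' * qval p phi gamma pol w s' (pol s')) \<le> (\<Sum>s'\<in>UNIV. p s a s' * Q s' (pig s'))"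
      using P1 by (intro sum_mono mult_left_mono) auto
    then show "x \<le> R s a + gamma * (\<Sum>s'\<in>UNIV. p s a s' * Q s' (pig s'))"
      using x bq[of pol s a] g by (simp add: mult_left_mono)
  qed
  have step2: "D s a \<le> gamma * (\<Sum>s'\<in>UNIV. p s a s' * D s' (pig s'))" for s a
  proof -
    have "D s a \<le> gamma * (\<Sum>s'\<in>UNIV. p s a s' * Q s' (pig s')) - gamma * (\<Sum>s'\<in>UNIV. p s a s' * q s' (pig s'))"
      using step1[of s a] bq[of pig s a] unfolding D_def q_def by simp
    also have "\<dots> = gamma * (\<Sum>s'\<in>UNIV. p s a s' * D s' (pig s'))"
      unfolding D_def by (simp add: right_diff_distrib sum_subtractf)
    finally show ?thesis .
  qed
  define M where "M = Max (range (\<lambda>(s, a). D s a))"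
  have DM: "D s a \<le> M" for s a
    unfolding M_def by (rule Max_ge) (auto intro: rev_image_eqI[of "(s, a)"])
  have "M \<in> range (\<lambda>(s, a). D s a)" unfolding M_def by (intro Max_in) auto
  then obtain s0 a0 where M0: "M = D s0 a0" by auto
  have "(\<Sum>s'\<in>UNIV. p s0 a0 s' * D s' (pig s')) \<le> (\<Sum>s'\<in>UNIV. p s0 a0 s' * M)"
    using P1 DM by (intro sum_mono mult_left_mono) auto
  also have "\<dots> = M" using P2 by (simp add: sum_distrib_right[symmetric])
  finally have "M \<le> gamma * M" using step2[of s0 a0] M0 g
    by (smt (verit) mult_left_mono)
  then have "M \<le> 0" using g
    by (smt (verit) mult_less_cancel_right2)
  then have "D s a \<le> 0" using DM[of s a] by simp
  then show ?thesis unfolding D_def Q_def q_def by simp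
qed

lemma exp_sf_norm:
  assumes P1: "\<forall>s a s'. 0 \<le> p s a s'" and P2: "\<forall>s a. (\<Sum>s'\<in>UNIV. p s a s') = 1"
    and B: "\<forall>s a s'. norm (phi s a s') \<le> B" and g: "0 \<le> gamma" "gamma < 1"
    and m1: "\<forall>s. 0 \<le> mu s" and m2: "(\<Sum>s\<in>UNIV. mu s) = 1"
  shows "norm (exp_sf p phi gamma mu pol) \<le> B / (1 - gamma)"
proof -
  have "norm (exp_sf p phi gamma mu pol) \<le> (\<Sum>s\<in>UNIV. norm (mu s *\<^sub>R sf p phi gamma pol s (pol s)))"
    unfolding exp_sf_def by (rule norm_sum)
  also have "\<dots> \<le> (\<Sum>s\<in>UNIV. mu s * (B / (1 - gamma)))"
    using m1 sf_sums(2)[OF P1 P2 B g] by (intro sum_mono) (metis abs_of_nonneg mult_left_mono norm_scaleR)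
  also have "\<dots> = B / (1 - gamma)" by (metis m2 mult_1 sum_distrib_right)
  finally show ?thesis .
qed


lemma val_eq:
  "val p phi gamma mu pol w = (\<Sum>s\<in>UNIV. mu s * qval p phi gamma pol w s (pol s))"
  by (simp add: val_def exp_sf_def qval_def inner_sum_left)

lemma norm_task: assumes "w \<in> task_set" shows "norm w \<le> 1"
proof -
  have "norm w \<le> (\<Sum>i\<in>UNIV. \<bar>w $ i\<bar>)" by (rule norm_le_l1_cart)
  also have "\<dots> = (\<Sum>i\<in>UNIV. w $ i)" using assms by (simp add: task_set_def)
  also have "\<dots> = 1" using assms by (simp add: task_set_def)
  finally show ?thesis .
qed

theorem theorem2:
  fixes p :: "'s::finite \<Rightarrow> 'act::finite \<Rightarrow> 's \<Rightarrow> real"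
    and phi :: "'s \<Rightarrow> 'act \<Rightarrow> 's \<Rightarrow> real^'d"
    and mu :: "'s \<Rightarrow> real"
    and gamma :: real
    and n :: nat
    and pis :: "nat \<Rightarrow> 's \<Rightarrow> 'act"
    and ws :: "nat \<Rightarrow> real^'d"
    and eps1 :: real
    and gpi :: "real^'d \<Rightarrow> 's \<Rightarrow> 'act"
  assumes "\<forall>s a s'. 0 \<le> p s a s'"
    and "\<forall>s a. (\<Sum>s'\<in>UNIV. p s a s') = 1"
    and "\<forall>s. 0 \<le> mu s"
    and "(\<Sum>s\<in>UNIV. mu s) = 1"
    and "0 \<le> gamma" and "gamma < 1"
    and "0 < n"
    and "\<forall>i<n. ws i \<in> task_set \<and> optimal_policy p phi gamma (pis i) (ws i)"
    and "eps_CCS p phi gamma mu (exp_sf p phi gamma mu ` pis ` {..<n}) eps1"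
    and "\<forall>w\<in>task_set. is_GPI_policy p phi gamma (pis ` {..<n}) w (gpi w)"
  shows "eps_CCS p phi gamma mu (exp_sf p phi gamma mu ` gpi ` task_set)
           (min eps1 (2 / (1 - gamma) * Max (range (\<lambda>(s, a, s'). norm (phi s a s')))
              * (SUP w\<in>task_set. MIN i\<in>{..<n}. norm (w - ws i))))"
proof -
  note P1 = assms(1) and P2 = assms(2) and m1 = assms(3) and m2 = assms(4)
    and g = assms(5,6) and n0 = assms(7) and opt = assms(8) and e1 = assms(9) and G = assms(10)
  define Bm where "Bm = Max (range (\<lambda>(s, a, s'). norm (phi s a s')))"
  have Bb: "\<forall>s a s'. norm (phi s a s') \<le> Bm"
  proof (intro allI)
    fix s a s'
    show "norm (phi s a s') \<le> Bm" unfolding Bm_def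
      by (rule Max_ge) (auto intro: rev_image_eqI[of "(s, a, s')"])
  qed
  have Bnn: "0 \<le> Bm" using Bb norm_ge_zero order_trans by blast
  define K where "K = Bm / (1 - gamma)"
  have Knn: "0 \<le> K" unfolding K_def using Bnn g by simp
  have nsf: "norm (exp_sf p phi gamma mu pol) \<le> K" for pol
    unfolding K_def by (rule exp_sf_norm[OF P1 P2 Bb g m1 m2])
  define Pols where "Pols = pis ` {..<n}"
  have finP: "finite Pols" and neP: "Pols \<noteq> {}" unfolding Pols_def using n0 by auto
  define SB where "SB = (SUP w\<in>task_set. MIN i\<in>{..<n}. norm (w - ws i))"
  have "\<forall>w\<in>task_set. (SUP psi\<in>CCS p phi gamma mu. psi \<bullet> w) - (SUP psi\<in>exp_sf p phi gamma mu ` gpi ` task_set. psi \<bullet> w)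
          \<le> min eps1 (2 / (1 - gamma) * Bm * SB)"
  proof
    fix w :: "real^'d" assume w: "w \<in> task_set"
    define V where "V pol = val p phi gamma mu pol w" for pol
    have "Max (range V) \<in> range V" by (intro Max_in) auto
    then obtain ps where psd: "V ps = Max (range V)" by (metis rangeE)
    have ps: "V pol \<le> V ps" for pol unfolding psd by (rule Max_ge) auto
    have ccs_ub: "(SUP psi\<in>CCS p phi gamma mu. psi \<bullet> w) \<le> V ps"
    proof (rule cSUP_least)
      show "CCS p phi gamma mu \<noteq> {}"
        unfolding CCS_def using ps unfolding V_def by blast
      fix psi assume "psi \<in> CCS p phi gamma mu"
      then obtain pol where "psi = exp_sf p phi gamma mu pol" by (auto simp: CCS_def)
      then show "psi \<bullet> w \<le> V ps" using ps[of pol] by (simp add: V_def val_def)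
    qed
    have gimp: "V (pis i) \<le> V (gpi w)" if "i < n" for i
    proof -
      have "qval p phi gamma (pis i) w s (pis i s) \<le> qval p phi gamma (gpi w) w s (gpi w s)" for s
      proof -
        have "qval p phi gamma (pis i) w s (pis i s) \<le> (MAX pol\<in>Pols. qval p phi gamma pol w s (pis i s))"
          using finP that unfolding Pols_def by (intro Max_ge) auto
        also have "\<dots> \<le> (MAX pol\<in>Pols. qval p phi gamma pol w s (gpi w s))"
          using G w unfolding is_GPI_policy_def Pols_def by blast
        also have "\<dots> \<le> qval p phi gamma (gpi w) w s (gpi w s)"
          by (rule gpi_improve[OF P1 P2 Bb g finP neP]) (use G w Pols_def in blast)
        finally show ?thesis .
      qed
      then show ?thesis unfolding V_def val_eq using m1
        by (intro sum_mono mult_left_mono) auto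
    qed
    have finG: "finite ((\<lambda>psi. psi \<bullet> w) ` exp_sf p phi gamma mu ` gpi ` task_set)"
    proof -
      have "exp_sf p phi gamma mu ` gpi ` task_set \<subseteq> range (exp_sf p phi gamma mu)" by auto
      moreover have "finite (range (exp_sf p phi gamma mu))" by simp
      ultimately show ?thesis by (meson finite_imageI finite_subset)
    qed
    have gpi_lb: "V (gpi w) \<le> (SUP psi\<in>exp_sf p phi gamma mu ` gpi ` task_set. psi \<bullet> w)"
      unfolding V_def val_def
      by (rule cSUP_upper) (use w finG in auto)
    have part1: "(SUP psi\<in>CCS p phi gamma mu. psi \<bullet> w) - (SUP psi\<in>exp_sf p phi gamma mu ` gpi ` task_set. psi \<bullet> w) \<le> eps1"
    proof -
      have "(SUP psi\<in>exp_sf p phi gamma mu ` pis ` {..<n}. psi \<bullet> w) \<le> V (gpi w)"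
      proof (rule cSUP_least)
        show "exp_sf p phi gamma mu ` pis ` {..<n} \<noteq> {}" using n0 by auto
        fix psi assume "psi \<in> exp_sf p phi gamma mu ` pis ` {..<n}"
        then obtain i where "i < n" "psi = exp_sf p phi gamma mu (pis i)" by auto
        then show "psi \<bullet> w \<le> V (gpi w)" using gimp[of i] by (simp add: V_def val_def)
      qed
      moreover have "(SUP psi\<in>CCS p phi gamma mu. psi \<bullet> w) - (SUP psi\<in>exp_sf p phi gamma mu ` pis ` {..<n}. psi \<bullet> w) \<le> eps1"
        using e1 w unfolding eps_CCS_def by blast
      ultimately show ?thesis using gpi_lb by linarith
    qed
    have "Min ((\<lambda>i. norm (w - ws i)) ` {..<n}) \<in> (\<lambda>i. norm (w - ws i)) ` {..<n}"
      using n0 by (intro Min_in) auto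
    then obtain j where j: "j < n" and jm: "(MIN i\<in>{..<n}. norm (w - ws i)) = norm (w - ws j)" by auto
    have optj: "optimal_policy p phi gamma (pis j) (ws j)" using opt j by blast
    have "V ps - V (pis j) \<le> 2 * K * norm (w - ws j)"
    proof -
      define a where "a = exp_sf p phi gamma mu ps"
      define b where "b = exp_sf p phi gamma mu (pis j)"
      have va: "V ps = a \<bullet> w" and vb: "V (pis j) = b \<bullet> w" by (simp_all add: V_def val_def a_def b_def)
      have "val p phi gamma mu ps (ws j) \<le> val p phi gamma mu (pis j) (ws j)"
        unfolding val_eq using m1 optj unfolding optimal_policy_def
        by (intro sum_mono mult_left_mono) auto
      then have mid: "a \<bullet> ws j \<le> b \<bullet> ws j" by (simp add: val_def a_def b_def)
      have c1: "a \<bullet> (w - ws j) \<le> K * norm (w - ws j)"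
        using norm_cauchy_schwarz[of a "w - ws j"] nsf[of ps] unfolding a_def
        by (smt (verit) mult_right_mono norm_ge_zero)
      have c2: "b \<bullet> (ws j - w) \<le> K * norm (w - ws j)"
        using norm_cauchy_schwarz[of b "ws j - w"] nsf[of "pis j"] unfolding b_def
        by (smt (verit) mult_right_mono norm_ge_zero norm_minus_commute)
      have "a \<bullet> w - b \<bullet> w = a \<bullet> (w - ws j) + (a \<bullet> ws j - b \<bullet> ws j) + b \<bullet> (ws j - w)"
        by (simp add: inner_diff_right)
      then show ?thesis using c1 c2 mid va vb by linarith
    qed
    moreover have "norm (w - ws j) \<le> SB"
    proof -
      have "bdd_above ((\<lambda>w. MIN i\<in>{..<n}. norm (w - ws i)) ` task_set)"
      proof (rule bdd_aboveI2)
        fix v :: "real^'d" assume v: "v \<in> task_set"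
        have "(MIN i\<in>{..<n}. norm (v - ws i)) \<le> norm (v - ws 0)"
          using n0 by (intro Min_le) auto
        also have "\<dots> \<le> norm v + norm (ws 0)" by (rule norm_triangle_ineq4)
        also have "\<dots> \<le> 1 + norm (ws 0)" using norm_task[OF v] by simp
        finally show "(MIN i\<in>{..<n}. norm (v - ws i)) \<le> 1 + norm (ws 0)" .
      qed
      then have "(MIN i\<in>{..<n}. norm (w - ws i)) \<le> SB"
        unfolding SB_def by (rule cSUP_upper[OF w])
      then show ?thesis using jm by simp
    qed
    ultimately have "V ps - V (pis j) \<le> 2 * K * SB"
      using Knn by (smt (verit) mult_left_mono)
    then have part2: "(SUP psi\<in>CCS p phi gamma mu. psi \<bullet> w) - (SUP psi\<in>exp_sf p phi gamma mu ` gpi ` task_set. psi \<bullet> w)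
        \<le> 2 / (1 - gamma) * Bm * SB"
      using ccs_ub gpi_lb gimp[OF j] unfolding K_def by (simp add: field_simps)
    show "(SUP psi\<in>CCS p phi gamma mu. psi \<bullet> w) - (SUP psi\<in>exp_sf p phi gamma mu ` gpi ` task_set. psi \<bullet> w)
          \<le> min eps1 (2 / (1 - gamma) * Bm * SB)"
      using part1 part2 by simp
  qed
  then show ?thesis unfolding eps_CCS_def Bm_def SB_def .
qed

end
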